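(* Let $n\ge2$, $G=\mathrm{SL}(n,\mathbb{R})$, and let $V$ be a finite-dimensional real vector space with a continuous linear representation of $G$. Let $\mathcal{B}\subset\mathbb{R}^{n-1}$ be an affine basis of $\mathbb{R}^{n-1}$ and let $v\in V$, $v\ne0$. Suppose that $u(e)v\in V^0+V^-$ for all $e\in\mathcal{B}$. Then $\pi_0(u(e)v)\ne0$ for all $e\in\mathcal{B}$.
   Context: $\mathcal{A}=\mathrm{diag}(n-1,-1,\dots,-1)\in\mathfrak{sl}(n,\mathbb{R})$, acting on $V$ via the derived representation; $V$ is the direct sum of the eigenspaces $V^\mu=\{v\in V:\mathcal{A}v=\mu v\}$. $V^-=\sum_{\mu<0}V^\mu$, and $\pi_0:V\to V^0$ is the projection parallel to the other eigenspaces of $\mathcal{A}$. For $\xi=(\xi_1,\dots,\xi_{n-1})\in\mathbb{R}^{n-1}$, $u(\xi)$ is the identity matrix with first row replaced by $(1,\xi_1,\dots,\xi_{n-1})$. An affine basis of $\mathbb{R}^{n-1}$ is a set $\mathcal{B}$ such that for any $e\in\mathcal{B}$ the set $\{e'-e:e'\in\mathcal{B}\setminus\{e\}\}$ is a basis of $\mathbb{R}^{n-1}$. *)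

theory Defs
  imports "HOL-Analysis.Analysis"
begin

text \<open>The index set of R^n is the finite type 'n option, where
 None plays the role of the first coordinate and Some i (i :: 'n) the remaining
 n-1 coordinates; hence n = CARD('n) + 1 \<ge> 2, and R^(n-1) = real^'n.\<close>

definition SL :: "(real^'k^'k) set" where
  "SL = {g. det g = 1}"

definition is_cont_rep :: "(real^'k^'k \<Rightarrow> real^'m^'m) \<Rightarrow> bool" where
  "is_cont_rep \<rho> \<longleftrightarrow>
     \<rho> (mat 1) = mat 1 \<and>
     (\<forall>g\<in>SL. \<forall>h\<in>SL. \<rho> (g ** h) = \<rho> g ** \<rho> h) \<and>
     continuous_on SL \<rho>"

definition Amat :: "real^('n::finite option)^('n option)" where
  "Amat = (\<chi> i j. if i = j then (if i = None then real CARD('n) else -1) else 0)"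

definition expA :: "real \<Rightarrow> real^('n::finite option)^('n option)" where
  "expA t = (\<chi> i j. if i = j then (if i = None then exp (t * real CARD('n)) else exp (- t)) else 0)"

definition dA :: "(real^('n::finite option)^('n option) \<Rightarrow> real^'m^'m) \<Rightarrow> real^'m^'m" where
  "dA \<rho> = vector_derivative (\<lambda>t. \<rho> (expA t)) (at 0)"

definition eigsp :: "real^'m^'m \<Rightarrow> real \<Rightarrow> (real^'m) set" where
  "eigsp D \<mu> = {v. D *v v = \<mu> *\<^sub>R v}"

definition Vminus :: "real^'m^'m \<Rightarrow> (real^'m) set" where
  "Vminus D = span (\<Union>\<mu>\<in>{\<mu>. \<mu> < 0}. eigsp D \<mu>)"

definition pi0 :: "real^'m^'m \<Rightarrow> real^'m \<Rightarrow> real^'m" where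
  "pi0 D v = (THE w. w \<in> eigsp D 0 \<and> v - w \<in> span (\<Union>\<mu>\<in>{\<mu>. \<mu> \<noteq> 0}. eigsp D \<mu>))"

definition umat :: "real^'n::finite \<Rightarrow> real^('n::finite option)^('n option)" where
  "umat \<xi> = (\<chi> i j. if i = None then (case j of None \<Rightarrow> 1 | Some k \<Rightarrow> \<xi> $ k)
                     else (if i = j then 1 else 0))"

definition affine_basis :: "(real^'n::finite) set \<Rightarrow> bool" where
  "affine_basis B \<longleftrightarrow> (\<forall>e\<in>B. independent ((\<lambda>e'. e' - e) ` (B - {e})) \<and>
                                   span ((\<lambda>e'. e' - e) ` (B - {e})) = UNIV)"

end

theory Submission
  imports Defs "HOL-Real_Asymp.Real_Asymp"
begin


lemma sum_option_UNIV: "(\<Sum>j\<in>(UNIV::'n::finite option set). f j) = f None + (\<Sum>k\<in>UNIV. f (Some k))"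
  by (subst UNIV_option_conv) (simp add: sum.reindex)

lemma prod_option_UNIV: "(\<Prod>j\<in>(UNIV::'n::finite option set). f j) = f None * (\<Prod>k\<in>UNIV. f (Some k))"
  by (subst UNIV_option_conv) (simp add: prod.reindex)

definition diagm :: "real^'k \<Rightarrow> real^'k^'k" where
  "diagm x = (\<chi> i j. if i = j then x$i else 0)"
definition Em :: "real^'k \<Rightarrow> real^'k^'k" where
  "Em x = diagm (\<chi> i. exp (x$i))"
definition ulow :: "real^'n \<Rightarrow> real^('n::finite option)^('n option)" where
  "ulow c = (\<chi> i j. if i = j then 1 else if j = None then (case i of None \<Rightarrow> 0 | Some k \<Rightarrow> c$k) else 0)"
definition gk :: "'n \<Rightarrow> real^('n::finite option)^('n option)" where
  "gk k = (\<chi> i j. if i = None \<and> j = Some k then 1 else if i = Some k \<and> j = None then -1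
           else if i = j \<and> i \<noteq> None \<and> i \<noteq> Some k then 1 else 0)"
definition gki :: "'n \<Rightarrow> real^('n::finite option)^('n option)" where
  "gki k = (\<chi> i j. if i = None \<and> j = Some k then -1 else if i = Some k \<and> j = None then 1
           else if i = j \<and> i \<noteq> None \<and> i \<noteq> Some k then 1 else 0)"
definition alpha :: "real^('n::finite option)" where
  "alpha = (\<chi> i. if i = None then real CARD('n) else -1)"
definition beta :: "'n::finite \<Rightarrow> real^('n option)" where
  "beta k = (\<chi> i. if i = Some k then real CARD('n) else -1)"


lemma diagm_mult: "diagm d *v x = (\<chi> i. d$i * x$i)"
  unfolding vec_eq_iff matrix_vector_mult_def diagm_def
  by (simp add: if_distrib[of "\<lambda>a. a * _"] cong: if_cong)

lemma ulow_mult: "ulow c *v x = (\<chi> i. case i of None \<Rightarrow> x$None | Some k \<Rightarrow> x$(Some k) + c$k * x$None)"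
  unfolding vec_eq_iff matrix_vector_mult_def ulow_def
proof
  fix i :: "'a option" show "(\<chi> i. \<Sum>j\<in>UNIV. (\<chi> i j. if i = j then 1 else if j = None then (case i of None \<Rightarrow> 0 | Some k \<Rightarrow> c $ k) else 0) $ i $ j * x $ j) $ i =
         (\<chi> i. case i of None \<Rightarrow> x $ None | Some k \<Rightarrow> x $ Some k + c $ k * x $ None) $ i"
    by (cases i) (simp_all add: sum_option_UNIV if_distrib[of "\<lambda>a. a * _"] cong: if_cong)
qed

lemma umat_mult: "umat c *v x = (\<chi> i. case i of None \<Rightarrow> x$None + (\<Sum>k\<in>UNIV. c$k * x$(Some k)) | Some k \<Rightarrow> x$(Some k))"
  unfolding vec_eq_iff matrix_vector_mult_def umat_def
proof
  fix i :: "'a option" show "(\<chi> i. \<Sum>j\<in>UNIV. (\<chi> i j. if i = None then case j of None \<Rightarrow> 1 | Some k \<Rightarrow> c $ k else if i = j then 1 else 0) $ i $ j * x $ j) $ i =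
         (\<chi> i. case i of None \<Rightarrow> x $ None + (\<Sum>k\<in>UNIV. c $ k * x $ Some k) | Some k \<Rightarrow> x $ Some k) $ i"
    by (cases i) (simp_all add: sum_option_UNIV if_distrib[of "\<lambda>a. a * _"] cong: if_cong)
qed

lemma gk_mult: "gk k *v x = (\<chi> i. if i = None then x$(Some k) else if i = Some k then - x$None else x$i)"
  unfolding vec_eq_iff matrix_vector_mult_def gk_def
proof
  fix i :: "'a option" show "(\<chi> i. \<Sum>j\<in>UNIV. (\<chi> i j. if i = None \<and> j = Some k then 1 else if i = Some k \<and> j = None then -1
           else if i = j \<and> i \<noteq> None \<and> i \<noteq> Some k then 1 else 0) $ i $ j * x $ j) $ i =
         (\<chi> i. if i = None then x$(Some k) else if i = Some k then - x$None else x$i) $ i"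
    by (cases i) (auto simp add: sum_option_UNIV if_distrib[of "\<lambda>a. a * _"] cong: if_cong)
qed

lemma gki_mult: "gki k *v x = (\<chi> i. if i = None then - x$(Some k) else if i = Some k then x$None else x$i)"
  unfolding vec_eq_iff matrix_vector_mult_def gki_def
proof
  fix i :: "'a option" show "(\<chi> i. \<Sum>j\<in>UNIV. (\<chi> i j. if i = None \<and> j = Some k then -1 else if i = Some k \<and> j = None then 1
           else if i = j \<and> i \<noteq> None \<and> i \<noteq> Some k then 1 else 0) $ i $ j * x $ j) $ i =
         (\<chi> i. if i = None then - x$(Some k) else if i = Some k then x$None else x$i) $ i"
    by (cases i) (auto simp add: sum_option_UNIV if_distrib[of "\<lambda>a. a * _"] cong: if_cong)
qed


lemma mat_eqI: "(\<And>x. A *v x = B *v x) \<Longrightarrow> A = (B::real^'k^'k)"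
  using matrix_eq by blast

lemma Em_mult: "Em d *v x = (\<chi> i. exp (d$i) * x$i)"
  by (simp add: Em_def diagm_mult)

lemma ulow_ulow: "ulow c ** ulow d = ulow (c + d)"
  by (rule mat_eqI) (auto simp: ulow_mult vec_eq_iff algebra_simps simp flip: matrix_vector_mul_assoc split: option.splits)

lemma umat_umat: "umat c ** umat d = umat (c + d)"
  by (rule mat_eqI) (auto simp: umat_mult vec_eq_iff algebra_simps sum.distrib simp flip: matrix_vector_mul_assoc split: option.splits)

lemma Em_Em: "Em x ** Em y = Em (x + y)"
  by (rule mat_eqI) (auto simp: Em_mult vec_eq_iff algebra_simps exp_add simp flip: matrix_vector_mul_assoc)

lemma ulow_0: "ulow 0 = mat 1"
  by (rule mat_eqI) (auto simp: ulow_mult vec_eq_iff split: option.splits)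

lemma umat_0: "umat 0 = mat 1"
  by (rule mat_eqI) (auto simp: umat_mult vec_eq_iff split: option.splits)

lemma Em_0: "Em 0 = mat 1"
  by (rule mat_eqI) (auto simp: Em_mult vec_eq_iff)


lemma expA_Em: "expA t = Em (t *\<^sub>R alpha)"
  by (auto simp: expA_def Em_def diagm_def alpha_def vec_eq_iff mult.commute)


lemma Em_alpha_ulow: "Em (t *\<^sub>R alpha) ** ulow c = ulow (exp (-(real CARD('n)+1) * t) *\<^sub>R c) ** Em (t *\<^sub>R (alpha::real^('n::finite option)))"
proof (rule mat_eqI)
  fix x :: "real^('n option)"
  have e: "exp (-(real CARD('n)+1) * t) * exp (t * real CARD('n)) = exp (- t)"
    by (simp add: exp_add[symmetric] algebra_simps)
  show "(Em (t *\<^sub>R alpha) ** ulow c) *v x = (ulow (exp (-(real CARD('n)+1) * t) *\<^sub>R c) ** Em (t *\<^sub>R alpha)) *v x"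
    unfolding vec_eq_iff matrix_vector_mul_assoc[symmetric]
  proof
    fix i show "(Em (t *\<^sub>R alpha) *v (ulow c *v x)) $ i = (ulow (exp (- (real CARD('n) + 1) * t) *\<^sub>R c) *v (Em (t *\<^sub>R alpha) *v x)) $ i"
    proof (cases i)
      case None then show ?thesis by (simp add: Em_mult ulow_mult alpha_def)
    next
      case (Some j)
      have "exp (- t) * (x $ Some j + c $ j * x $ None) = exp (- t) * x $ Some j + (exp (-(real CARD('n)+1) * t) * exp (t * real CARD('n))) * c $ j * x $ None"
        unfolding e by (simp add: distrib_left)
      then show ?thesis using Some by (simp add: Em_mult ulow_mult alpha_def mult.assoc mult.left_commute)
    qed
  qed
qed

lemma Em_beta_ulow: "c $ k = 0 \<Longrightarrow> Em (t *\<^sub>R beta k) ** ulow c = ulow c ** Em (t *\<^sub>R beta k)"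
  by (rule mat_eqI) (auto simp: Em_mult ulow_mult vec_eq_iff beta_def algebra_simps simp flip: matrix_vector_mul_assoc split: option.splits)


lemma sum_axis_mult: "(\<Sum>l\<in>UNIV. (axis k a) $ l * f l) = a * (f k::real)"
  by (simp add: axis_def if_distrib[of "\<lambda>a. a * _"] cong: if_cong)

lemma bruhat: "Em (t *\<^sub>R beta k) ** ulow (axis k 1) =
   gki k ** ulow (- (exp (-(real CARD('n)+1) * t)) *\<^sub>R axis k 1) ** Em (t *\<^sub>R (alpha::real^('n::finite option))) ** umat (axis k 1)"
proof (rule mat_eqI)
  fix x :: "real^('n option)"
  have e: "exp (-(real CARD('n)+1) * t) * exp (t * real CARD('n)) = exp (- t)"
    by (simp add: exp_add[symmetric] algebra_simps)
  show "(Em (t *\<^sub>R beta k) ** ulow (axis k 1)) *v x = (gki k ** ulow (- (exp (-(real CARD('n)+1) * t)) *\<^sub>R axis k 1) ** Em (t *\<^sub>R alpha) ** umat (axis k 1)) *v x"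
    unfolding vec_eq_iff matrix_vector_mul_assoc[symmetric]
  proof
    have ee: "exp (- t) * x $ Some k - exp (-(real CARD('n)+1) * t) * (exp (t * real CARD('n)) * (x $ None + x $ Some k)) = - (exp (- t) * x $ None)"
          unfolding mult.assoc[symmetric] e by (simp add: algebra_simps)
    fix i show "(Em (t *\<^sub>R beta k) *v (ulow (axis k 1) *v x)) $ i =
         (gki k *v (ulow (- exp (- (real CARD('n) + 1) * t) *\<^sub>R axis k 1) *v (Em (t *\<^sub>R alpha) *v (umat (axis k 1) *v x)))) $ i"
    proof (cases i)
      case None then show ?thesis using ee by (simp add: Em_mult ulow_mult umat_mult gki_mult alpha_def beta_def sum_axis_mult)
    next
      case (Some j)
      show ?thesis
      proof (cases "j = k")
        case True
        have "exp (- t) * x $ Some k - exp (-(real CARD('n)+1) * t) * (exp (t * real CARD('n)) * (x $ None + x $ Some k)) = - (exp (- t) * x $ None)"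
          unfolding mult.assoc[symmetric] e by (simp add: algebra_simps)
        then show ?thesis using Some True by (simp add: Em_mult ulow_mult umat_mult gki_mult alpha_def beta_def sum_axis_mult)
      next
        case False
        then show ?thesis using Some by (simp add: Em_mult ulow_mult umat_mult gki_mult alpha_def beta_def sum_axis_mult axis_def)
      qed
    qed
  qed
qed

lemma gki_fact: fixes k :: "'n::finite" shows "gki k = ulow (axis k 1) ** umat (- axis k 1) ** ulow (axis k 1)"
proof (rule mat_eqI)
  fix x :: "real^('n option)"
  show "gki k *v x = (ulow (axis k 1) ** umat (- axis k 1) ** ulow (axis k 1)) *v x"
    unfolding vec_eq_iff matrix_vector_mul_assoc[symmetric]
  proof
    fix i show "(gki k *v x) $ i = (ulow (axis k 1) *v (umat (- axis k 1) *v (ulow (axis k 1) *v x))) $ i"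
    proof (cases i)
      case None then show ?thesis 
        by (simp add: ulow_mult umat_mult gki_mult sum_axis_mult sum_negf)
    next
      case (Some j)
      then show ?thesis
        by (cases "j = k") (simp_all add: ulow_mult umat_mult gki_mult sum_axis_mult sum_negf, simp_all add: axis_def)
    qed
  qed
qed


lemma umat_rows: "umat c = (\<chi> r. if r = None then row None (mat 1) + (\<Sum>k\<in>UNIV. c$k *s row (Some k) (mat 1)) else row r (mat 1))"
proof -
  have "(\<Sum>k\<in>UNIV. c$k *s row (Some k) (mat 1 :: real^('a option)^('a option))) $ j = (case j of None \<Rightarrow> 0 | Some l \<Rightarrow> c$l)" for j
    by (cases j) (simp_all add: row_def mat_def sum_component if_distrib cong: if_cong)
  then show ?thesis
    by (auto simp: umat_def vec_eq_iff row_def mat_def split: option.splits)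
qed

lemma det_umat: "det (umat c) = 1"
proof -
  have "(\<Sum>k\<in>UNIV. c$k *s row (Some k) (mat 1 :: real^('a option)^('a option))) \<in> vec.span {row j (mat 1) |j. j \<noteq> None}"
    by (intro vec.span_sum vec.span_scale vec.span_base) auto
  from det_row_span[OF this] show ?thesis
    by (simp add: umat_rows[symmetric])
qed

lemma ulow_transpose: "ulow c = transpose (umat c)"
  by (auto simp: ulow_def umat_def transpose_def vec_eq_iff split: option.splits)

lemma det_ulow: "det (ulow c) = 1"
  by (simp add: ulow_transpose det_transpose det_umat)

lemma det_Em: "det (Em x) = exp (sum (\<lambda>i. x$i) UNIV)"
  by (simp add: Em_def diagm_def det_diagonal exp_sum)

lemma sum_alpha: "(\<Sum>i\<in>UNIV. (alpha::real^('n::finite option)) $ i) = 0"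
  by (simp add: alpha_def sum_option_UNIV)

lemma sum_beta: "(\<Sum>i\<in>UNIV. (beta k::real^('n::finite option)) $ i) = 0"
proof -
  have "(\<Sum>j\<in>UNIV. (if j = k then real CARD('n) else -1)) = real CARD('n) + (\<Sum>j\<in>UNIV-{k}. -1)"
    by (subst sum.remove[of UNIV k]) auto
  also have "\<dots> = 1" by (simp add: card_Diff_singleton)
  finally show ?thesis by (simp add: beta_def sum_option_UNIV)
qed

lemma sum_betas: "(\<Sum>k\<in>UNIV. beta k) = - (alpha::real^('n::finite option))"
proof -
  have "(\<Sum>k\<in>UNIV. (if j = k then real CARD('n) else -1)) = 1" for j :: 'n
  proof -
    have "(\<Sum>k\<in>UNIV. (if j = k then real CARD('n) else -1)) = real CARD('n) + (\<Sum>k\<in>UNIV-{j}. -1)"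
      by (subst sum.remove[of UNIV j]) auto
    also have "\<dots> = 1" by (simp add: card_Diff_singleton)
    finally show ?thesis .
  qed
  then show ?thesis
    by (auto simp: vec_eq_iff beta_def alpha_def sum_component split: option.splits)
qed

lemma SL_det: "A \<in> SL \<longleftrightarrow> det A = 1" by (simp add: SL_def)

lemma umat_SL: "umat c \<in> SL" by (simp add: SL_det det_umat)
lemma ulow_SL: "ulow c \<in> SL" by (simp add: SL_det det_ulow)
lemma Em_SL: "sum (\<lambda>i. x$i) UNIV = 0 \<Longrightarrow> Em x \<in> SL" by (simp add: SL_det det_Em)
lemma Em_alpha_SL: "Em (t *\<^sub>R alpha) \<in> SL"
  by (rule Em_SL) (simp add: sum_distrib_left[symmetric] sum_alpha)
lemma Em_beta_SL: "Em (t *\<^sub>R beta k) \<in> SL"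
  by (rule Em_SL) (simp add: sum_distrib_left[symmetric] sum_beta)
lemma gki_SL: "gki k \<in> SL"
  by (simp add: SL_det gki_fact det_mul det_ulow det_umat)
lemma expA_SL: "expA t \<in> SL" by (simp add: expA_Em Em_alpha_SL)
lemma mat1_SL: "mat 1 \<in> SL" by (simp add: SL_det)


lemma bb_mv: "bounded_bilinear (\<lambda>(A::real^'m^'n) (x::real^'m). A *v x)"
  unfolding bilinear_conv_bounded_bilinear[symmetric] bilinear_def
  by (auto intro!: linearI simp: algebra_simps scaleR_matrix_vector_assoc)

lemma mm_add: "((A::real^'m^'n) + C) ** (B::real^'k^'m) = A ** B + C ** B"
  by (simp add: vec_eq_iff matrix_matrix_mult_def sum.distrib algebra_simps)
lemma mm_scaleR: "(c *\<^sub>R (A::real^'m^'n)) ** (B::real^'k^'m) = c *\<^sub>R (A ** B)"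
  by (simp add: vec_eq_iff matrix_matrix_mult_def sum_distrib_left algebra_simps)
lemma mm_scaleR2: "(A::real^'m^'n) ** (c *\<^sub>R (B::real^'k^'m)) = c *\<^sub>R (A ** B)"
  by (simp add: vec_eq_iff matrix_matrix_mult_def sum_distrib_left algebra_simps)

lemma bb_mm: "bounded_bilinear (\<lambda>(A::real^'m^'n) (B::real^'k^'m). A ** B)"
  unfolding bilinear_conv_bounded_bilinear[symmetric] bilinear_def
  by (auto intro!: linearI simp: mm_add matrix_add_ldistrib mm_scaleR mm_scaleR2)

lemma rep_mult: "is_cont_rep \<rho> \<Longrightarrow> A \<in> SL \<Longrightarrow> B \<in> SL \<Longrightarrow> \<rho> (A ** B) = \<rho> A ** \<rho> B"
  by (simp add: is_cont_rep_def)

lemma rep_1: "is_cont_rep \<rho> \<Longrightarrow> \<rho> (mat 1) = mat 1"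
  by (simp add: is_cont_rep_def)

lemma rep_tendsto: "is_cont_rep \<rho> \<Longrightarrow> (f \<longlongrightarrow> A) F \<Longrightarrow> A \<in> SL \<Longrightarrow> eventually (\<lambda>x. f x \<in> SL) F
   \<Longrightarrow> ((\<lambda>x. \<rho> (f x)) \<longlongrightarrow> \<rho> A) F"
  unfolding is_cont_rep_def using continuous_on_tendsto_compose by blast

lemma rep_inv: "is_cont_rep \<rho> \<Longrightarrow> A \<in> SL \<Longrightarrow> B \<in> SL \<Longrightarrow> A ** B = mat 1 \<Longrightarrow> \<rho> A ** \<rho> B = mat 1"
  by (metis rep_mult rep_1)

lemma ulow_tendsto:
  assumes "(f \<longlongrightarrow> 0) F"
  shows "((\<lambda>x. ulow (f x *\<^sub>R c)) \<longlongrightarrow> mat 1) F"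
proof -
  have "((\<lambda>x. ulow (f x *\<^sub>R c)) \<longlongrightarrow> ulow (0 *\<^sub>R c)) F"
    unfolding ulow_def
    by (intro tendsto_vec_lambda) (auto intro!: tendsto_eq_intros assms split: option.splits)
  then show ?thesis by (simp add: ulow_0)
qed


definition BD :: "'a filter \<Rightarrow> ('a \<Rightarrow> 'b::real_normed_vector) \<Rightarrow> bool" where
  "BD F f \<longleftrightarrow> (\<exists>C. eventually (\<lambda>t. norm (f t) \<le> C) F)"

lemma BD_mv: "BD F A \<Longrightarrow> BD F x \<Longrightarrow> BD F (\<lambda>t. (A t::real^'m^'n) *v (x t :: real^'m))"
proof -
  assume A: "BD F A" and x: "BD F x"
  obtain K where K: "\<And>a b. norm ((a::real^'m^'n) *v (b::real^'m)) \<le> norm a * norm b * K"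
    using bounded_bilinear.bounded[OF bb_mv] by blast
  obtain a where a: "eventually (\<lambda>t. norm (A t) \<le> a) F" using A BD_def by blast
  obtain b where b: "eventually (\<lambda>t. norm (x t) \<le> b) F" using x BD_def by blast
  have "eventually (\<lambda>t. norm (A t *v x t) \<le> a * b * \<bar>K\<bar>) F"
    using a b
  proof eventually_elim
    case (elim t)
    have "norm (A t *v x t) \<le> norm (A t) * norm (x t) * K" by (rule K)
    also have "\<dots> \<le> norm (A t) * norm (x t) * \<bar>K\<bar>"
      by (intro mult_left_mono) auto
    also have "\<dots> \<le> a * b * \<bar>K\<bar>"
      using elim by (intro mult_right_mono mult_mono) (auto intro: order_trans[OF norm_ge_zero])
    finally show ?case .
  qed
  then show ?thesis unfolding BD_def by blast
qed

lemma BD_const: "BD F (\<lambda>t. c)"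
  unfolding BD_def by (rule exI[of _ "norm c"]) simp

lemma BD_tendsto: "(f \<longlongrightarrow> l) F \<Longrightarrow> BD F f"
proof -
  assume "(f \<longlongrightarrow> l) F"
  then have "((\<lambda>t. norm (f t)) \<longlongrightarrow> norm l) F" by (rule tendsto_norm)
  then have "eventually (\<lambda>t. norm (f t) < norm l + 1) F"
    by (rule order_tendstoD) simp
  then show ?thesis unfolding BD_def by (blast intro: eventually_mono less_imp_le)
qed

lemma BD_add: "BD F f \<Longrightarrow> BD F g \<Longrightarrow> BD F (\<lambda>t. f t + g t)"
proof -
  assume "BD F f" "BD F g"
  then obtain a b where a: "eventually (\<lambda>t. norm (f t) \<le> a) F" and b: "eventually (\<lambda>t. norm (g t) \<le> b) F"
    unfolding BD_def by blast
  have "eventually (\<lambda>t. norm (f t + g t) \<le> a + b) F"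
    using a b by eventually_elim (rule order_trans[OF norm_triangle_ineq], simp)
  then show ?thesis unfolding BD_def by blast
qed

lemma BD_scale: "BD F f \<Longrightarrow> BD F (\<lambda>t. c *\<^sub>R f t)"
proof -
  assume "BD F f"
  then obtain a where a: "eventually (\<lambda>t. norm (f t) \<le> a) F"
    unfolding BD_def by blast
  have "eventually (\<lambda>t. norm (c *\<^sub>R f t) \<le> \<bar>c\<bar> * a) F"
    using a by eventually_elim (simp add: mult_left_mono)
  then show ?thesis unfolding BD_def by blast
qed

lemma orthonormal_expand:
  fixes Bs :: "'a::euclidean_space set"
  assumes fin: "finite Bs" and orth: "pairwise orthogonal Bs" and nrm: "\<And>b. b \<in> Bs \<Longrightarrow> norm b = 1"
    and y: "y \<in> span Bs"
  shows "y = (\<Sum>b\<in>Bs. (y \<bullet> b) *\<^sub>R b)"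
proof -
  obtain u where u: "y = (\<Sum>v\<in>Bs. u v *\<^sub>R v)"
    using y span_finite[OF fin] by auto
  have "y \<bullet> b = u b" if b: "b \<in> Bs" for b
  proof -
    have "y \<bullet> b = (\<Sum>v\<in>Bs. u v * (v \<bullet> b))"
      by (simp add: u inner_sum_left)
    also have "\<dots> = u b * (b \<bullet> b) + (\<Sum>v\<in>Bs - {b}. u v * (v \<bullet> b))"
      by (rule sum.remove[OF fin b])
    also have "(\<Sum>v\<in>Bs - {b}. u v * (v \<bullet> b)) = 0"
      using orth b by (intro sum.neutral) (auto simp: pairwise_def orthogonal_def)
    also have "b \<bullet> b = 1" using nrm[OF b] by (simp add: norm_eq_1)
    finally show ?thesis by simp
  qed
  then show ?thesis by (simp add: u)
qed

lemma unif_bound: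
  fixes L :: "'a \<Rightarrow> real^'m^'n"
  assumes W: "subspace W" and bd: "\<And>y. y \<in> W \<Longrightarrow> BD F (\<lambda>t. L t *v y)"
  shows "\<exists>C\<ge>0. eventually (\<lambda>t. \<forall>y\<in>W. norm (L t *v y) \<le> C * norm y) F"
proof -
  obtain Bs where Bs: "Bs \<subseteq> W" "pairwise orthogonal Bs" "\<And>x. x \<in> Bs \<Longrightarrow> norm x = 1"
     "independent Bs" "span Bs = W"
    using orthonormal_basis_subspace[OF W] by metis
  have fin: "finite Bs" using Bs(4) independent_imp_finite by blast
  have "\<forall>b\<in>Bs. \<exists>c. eventually (\<lambda>t. norm (L t *v b) \<le> c) F"
    using bd Bs(1) unfolding BD_def by blast
  then obtain c where c: "\<And>b. b \<in> Bs \<Longrightarrow> eventually (\<lambda>t. norm (L t *v b) \<le> c b) F"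
    by metis
  have ev: "eventually (\<lambda>t. \<forall>b\<in>Bs. norm (L t *v b) \<le> c b) F"
    using fin c by (simp add: eventually_ball_finite)
  define C where "C = (\<Sum>b\<in>Bs. max (c b) 0)"
  have C0: "C \<ge> 0" unfolding C_def by (intro sum_nonneg) auto
  have "eventually (\<lambda>t. \<forall>y\<in>W. norm (L t *v y) \<le> C * norm y) F"
    using ev
  proof eventually_elim
    case (elim t)
    show ?case
    proof
      fix y assume yW: "y \<in> W"
      have y: "y = (\<Sum>b\<in>Bs. (y \<bullet> b) *\<^sub>R b)"
        using orthonormal_expand[OF fin Bs(2) Bs(3)] yW Bs(5) by blast
      have "L t *v y = (\<Sum>b\<in>Bs. (y \<bullet> b) *\<^sub>R (L t *v b))"
        by (subst y) (simp add: linear_sum[OF matrix_vector_mul_linear] matrix_vector_mult_scaleR)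
      also have "norm \<dots> \<le> (\<Sum>b\<in>Bs. norm ((y \<bullet> b) *\<^sub>R (L t *v b)))"
        by (rule norm_sum)
      also have "\<dots> \<le> (\<Sum>b\<in>Bs. norm y * max (c b) 0)"
      proof (rule sum_mono)
        fix b assume b: "b \<in> Bs"
        have "\<bar>y \<bullet> b\<bar> \<le> norm y" using Cauchy_Schwarz_ineq2[of y b] Bs(3)[OF b] by simp
        moreover have "norm (L t *v b) \<le> max (c b) 0" using elim b by force
        ultimately show "norm ((y \<bullet> b) *\<^sub>R (L t *v b)) \<le> norm y * max (c b) 0"
          by (simp add: mult_mono)
      qed
      also have "\<dots> = C * norm y" by (simp add: C_def sum_distrib_left mult.commute)
      finally show "norm (L t *v y) \<le> C * norm y" .
    qed
  qed
  then show ?thesis using C0 by blast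
qed


lemma SL_mult: "A \<in> SL \<Longrightarrow> B \<in> SL \<Longrightarrow> A ** B \<in> SL"
  by (simp add: SL_det det_mul)

lemma sum_betaK: "(\<Sum>i\<in>UNIV. (t *\<^sub>R (\<Sum>k\<in>K. beta k)) $ i) = (0::real)"
proof -
  have "(\<Sum>i\<in>UNIV. \<Sum>x\<in>K. beta x $ i) = (\<Sum>x\<in>K. \<Sum>i\<in>UNIV. (beta x :: real^('a::finite option)) $ i)"
    by (rule sum.swap)
  then show ?thesis by (simp add: sum_component sum_beta sum_distrib_left[symmetric])
qed

lemma Em_betaK_SL: "Em (t *\<^sub>R (\<Sum>k\<in>K. beta k)) \<in> SL"
  by (rule Em_SL) (rule sum_betaK)

lemma core:
  fixes \<rho> :: "real^('n::finite option)^('n option) \<Rightarrow> real^'m^'m" and w :: "real^'m"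
  assumes rep: "is_cont_rep \<rho>"
  and h1: "((\<lambda>t. \<rho> (expA t) *v w) \<longlongrightarrow> 0) at_top"
  and h2: "\<And>k. BD at_top (\<lambda>t. \<rho> (expA t) *v (\<rho> (umat (axis k 1)) *v w))"
  shows "w = 0"
proof -
  define s where "s t = exp (-(real CARD('n)+1) * t)" for t
  have s0: "(s \<longlongrightarrow> 0) at_top" unfolding s_def by real_asymp
  define one :: "real^'n" where "one = (\<chi> j. 1)"
  have mulv: "\<And>A B x. A \<in> SL \<Longrightarrow> B \<in> SL \<Longrightarrow> \<rho> (A ** B) *v x = \<rho> A *v (\<rho> B *v x)"
    using rep_mult[OF rep] by (simp add: matrix_vector_mul_assoc)
  have h2': "BD at_top (\<lambda>t. \<rho> (Em (t *\<^sub>R alpha)) *v (\<rho> (umat (axis k 1)) *v w))" for k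
    using h2[of k] by (simp add: expA_Em)
  have h1': "((\<lambda>t. \<rho> (Em (t *\<^sub>R alpha)) *v w) \<longlongrightarrow> 0) at_top"
    using h1 by (simp add: expA_Em)
  have ulow_rho: "((\<lambda>t. \<rho> (ulow (f t *\<^sub>R c))) \<longlongrightarrow> mat 1) at_top" if "(f \<longlongrightarrow> 0) at_top" for f c
  proof -
    have "((\<lambda>t. \<rho> (ulow (f t *\<^sub>R c))) \<longlongrightarrow> \<rho> (mat 1)) at_top"
      by (rule rep_tendsto[OF rep ulow_tendsto[OF that] mat1_SL]) (simp add: ulow_SL)
    then show ?thesis using rep_1[OF rep] by simp
  qed
  have y: "BD at_top (\<lambda>t. \<rho> (Em (t *\<^sub>R beta k)) *v (\<rho> (ulow (axis k 1)) *v w))" for k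
  proof -
    have eq: "\<rho> (Em (t *\<^sub>R beta k)) *v (\<rho> (ulow (axis k 1)) *v w) = \<rho> (gki k) *v (\<rho> (ulow ((- s t) *\<^sub>R axis k 1)) *v (\<rho> (Em (t *\<^sub>R alpha)) *v (\<rho> (umat (axis k 1)) *v w)))" for t
    proof -
      have "\<rho> (Em (t *\<^sub>R beta k)) *v (\<rho> (ulow (axis k 1)) *v w) = \<rho> (Em (t *\<^sub>R beta k) ** ulow (axis k 1)) *v w"
        by (simp add: mulv Em_beta_SL ulow_SL)
      also have "\<dots> = \<rho> (gki k ** ulow ((- s t) *\<^sub>R axis k 1) ** Em (t *\<^sub>R alpha) ** umat (axis k 1)) *v w"
        by (simp add: bruhat s_def)
      also have "\<dots> = \<rho> (gki k) *v (\<rho> (ulow ((- s t) *\<^sub>R axis k 1)) *v (\<rho> (Em (t *\<^sub>R alpha)) *v (\<rho> (umat (axis k 1)) *v w)))"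
        by (simp add: mulv SL_mult gki_SL ulow_SL Em_alpha_SL umat_SL)
      finally show ?thesis .
    qed
    have "((\<lambda>t. - s t) \<longlongrightarrow> 0) at_top" using tendsto_minus[OF s0] by simp
    then have "BD at_top (\<lambda>t. \<rho> (ulow ((- s t) *\<^sub>R axis k 1)))"
      by (rule BD_tendsto[OF ulow_rho])
    then show ?thesis unfolding eq
      by (intro BD_mv[OF BD_const] BD_mv h2')
  qed
  define z where "z = \<rho> (ulow one) *v w"
  have hz: "BD at_top (\<lambda>t. \<rho> (Em (t *\<^sub>R beta k)) *v z)" for k
  proof -
    have c: "(one - axis k 1) $ k = 0" by (simp add: one_def axis_def)
    have eq: "\<rho> (Em (t *\<^sub>R beta k)) *v z = \<rho> (ulow (one - axis k 1)) *v (\<rho> (Em (t *\<^sub>R beta k)) *v (\<rho> (ulow (axis k 1)) *v w))" for t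
    proof -
      have "ulow one = ulow (one - axis k 1) ** ulow (axis k 1)" by (simp add: ulow_ulow)
      then have "\<rho> (Em (t *\<^sub>R beta k)) *v z = \<rho> (Em (t *\<^sub>R beta k) ** ulow (one - axis k 1) ** ulow (axis k 1)) *v w"
        by (simp add: z_def mulv Em_beta_SL ulow_SL SL_mult matrix_mul_assoc)
      also have "\<dots> = \<rho> (ulow (one - axis k 1) ** Em (t *\<^sub>R beta k) ** ulow (axis k 1)) *v w"
        by (simp add: Em_beta_ulow[OF c])
      also have "\<dots> = \<rho> (ulow (one - axis k 1)) *v (\<rho> (Em (t *\<^sub>R beta k)) *v (\<rho> (ulow (axis k 1)) *v w))"
        by (simp add: mulv Em_beta_SL ulow_SL SL_mult)
      finally show ?thesis .
    qed
    show ?thesis unfolding eq by (intro BD_mv[OF BD_const] y)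
  qed
  have Emv: "\<rho> (Em a) *v (\<rho> (Em b) *v y) = \<rho> (Em (a + b)) *v y"
    if "(\<Sum>i\<in>UNIV. a$i) = 0" "(\<Sum>i\<in>UNIV. b$i) = 0" for a b y
    using that by (simp add: mulv[symmetric] Em_SL Em_Em)
  have sum0_add: "(\<Sum>i\<in>UNIV. (a + b)$i) = (0::real)" if "(\<Sum>i\<in>UNIV. a$i) = 0" "(\<Sum>i\<in>UNIV. b$i) = 0" for a b :: "real^('n option)"
    using that by (simp add: sum.distrib)
  have sumb: "(\<Sum>i\<in>UNIV. (t *\<^sub>R beta k)$i) = (0::real)" for t k
    by (simp add: sum_distrib_left[symmetric] sum_beta)
  define T where "T k = {y. BD at_top (\<lambda>t. \<rho> (Em (t *\<^sub>R beta k)) *v y)}" for k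
  define W where "W = {y. \<forall>x. (\<Sum>i\<in>UNIV. x$i) = 0 \<longrightarrow> (\<forall>k. \<rho> (Em x) *v y \<in> T k)}"
  have subW: "subspace W"
    unfolding subspace_def
  proof safe
    show "0 \<in> W" by (simp add: W_def T_def BD_const)
  next
    fix y1 y2 assume "y1 \<in> W" "y2 \<in> W"
    then show "y1 + y2 \<in> W"
      by (auto simp: W_def T_def matrix_vector_right_distrib intro!: BD_add)
  next
    fix c y assume "y \<in> W"
    then show "c *\<^sub>R y \<in> W"
      by (auto simp: W_def T_def matrix_vector_mult_scaleR intro!: BD_scale)
  qed
  have zW: "z \<in> W"
    unfolding W_def T_def
  proof (intro allI impI CollectI)
    fix x :: "real^('n option)" and k assume x: "(\<Sum>i\<in>UNIV. x$i) = 0"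
    have "\<rho> (Em (t *\<^sub>R beta k)) *v (\<rho> (Em x) *v z) = \<rho> (Em x) *v (\<rho> (Em (t *\<^sub>R beta k)) *v z)" for t
      using Emv[OF sumb x, of t k z] Emv[OF x sumb, of t k z] by (simp add: add.commute)
    then show "BD at_top (\<lambda>t. \<rho> (Em (t *\<^sub>R beta k)) *v (\<rho> (Em x) *v z))"
      by (simp add: BD_mv[OF BD_const hz])
  qed
  have invW: "\<rho> (Em x) *v y \<in> W" if "y \<in> W" "(\<Sum>i\<in>UNIV. x$i) = 0" for x y
    using that unfolding W_def by (auto simp: Emv intro!: sum0_add)
  have WT: "y \<in> W \<Longrightarrow> y \<in> T k" for y k
    unfolding W_def using rep_1[OF rep] by (force simp: Em_0 dest: spec[of _ 0])
  have unif: "\<exists>C\<ge>0. eventually (\<lambda>t. \<forall>y\<in>W. norm (\<rho> (Em (t *\<^sub>R beta k)) *v y) \<le> C * norm y) at_top" for k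
    by (rule unif_bound[OF subW]) (use WT in \<open>auto simp: T_def\<close>)
  have Kstep: "\<exists>C\<ge>0. eventually (\<lambda>t. \<forall>y\<in>W. norm (\<rho> (Em (t *\<^sub>R (\<Sum>k\<in>K. beta k))) *v y) \<le> C * norm y) at_top"
    if "finite K" for K
    using that
  proof (induction K rule: finite_induct)
    case empty
    then show ?case using rep_1[OF rep] by (auto simp: Em_0 intro!: exI[of _ 1])
  next
    case (insert j K)
    obtain C1 where C1: "C1 \<ge> 0" "eventually (\<lambda>t. \<forall>y\<in>W. norm (\<rho> (Em (t *\<^sub>R beta j)) *v y) \<le> C1 * norm y) at_top"
      using unif by blast
    obtain C2 where C2: "C2 \<ge> 0" "eventually (\<lambda>t. \<forall>y\<in>W. norm (\<rho> (Em (t *\<^sub>R (\<Sum>k\<in>K. beta k))) *v y) \<le> C2 * norm y) at_top"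
      using insert.IH by blast
    have "eventually (\<lambda>t. \<forall>y\<in>W. norm (\<rho> (Em (t *\<^sub>R (\<Sum>k\<in>insert j K. beta k))) *v y) \<le> (C1 * C2) * norm y) at_top"
      using C1(2) C2(2)
    proof eventually_elim
      case (elim t)
      show ?case
      proof
        fix y assume yW: "y \<in> W"
        have eq: "\<rho> (Em (t *\<^sub>R (\<Sum>k\<in>insert j K. beta k))) *v y = \<rho> (Em (t *\<^sub>R beta j)) *v (\<rho> (Em (t *\<^sub>R (\<Sum>k\<in>K. beta k))) *v y)"
          using insert.hyps Emv[OF sumb sum_betaK, of t j t K y] by (simp add: scaleR_right_distrib)
        have yW2: "\<rho> (Em (t *\<^sub>R (\<Sum>k\<in>K. beta k))) *v y \<in> W"
          using invW[OF yW sum_betaK] .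
        have "norm (\<rho> (Em (t *\<^sub>R beta j)) *v (\<rho> (Em (t *\<^sub>R (\<Sum>k\<in>K. beta k))) *v y)) \<le> C1 * norm (\<rho> (Em (t *\<^sub>R (\<Sum>k\<in>K. beta k))) *v y)"
          using elim yW2 by blast
        also have "\<dots> \<le> C1 * (C2 * norm y)"
          using elim yW C1(1) by (intro mult_left_mono) auto
        finally show "norm (\<rho> (Em (t *\<^sub>R (\<Sum>k\<in>insert j K. beta k))) *v y) \<le> (C1 * C2) * norm y"
          by (simp add: eq mult.assoc)
      qed
    qed
    then show ?case using C1(1) C2(1) by (intro exI[of _ "C1 * C2"]) auto
  qed
  obtain C where C: "C \<ge> 0" "eventually (\<lambda>t. \<forall>y\<in>W. norm (\<rho> (Em (t *\<^sub>R (- alpha))) *v y) \<le> C * norm y) at_top"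
    using Kstep[of UNIV] by (auto simp: sum_betas)
  have suma: "(\<Sum>i\<in>UNIV. (t *\<^sub>R alpha)$i) = (0::real)" for t
    by (simp add: sum_distrib_left[symmetric] sum_alpha)
  have fz: "\<rho> (Em (t *\<^sub>R alpha)) *v z = \<rho> (ulow (s t *\<^sub>R one)) *v (\<rho> (Em (t *\<^sub>R alpha)) *v w)" for t
    by (simp add: z_def mulv[symmetric] ulow_SL Em_alpha_SL Em_alpha_ulow s_def)
  have lim: "((\<lambda>t. \<rho> (Em (t *\<^sub>R alpha)) *v z) \<longlongrightarrow> 0) at_top"
    unfolding fz using bounded_bilinear.tendsto[OF bb_mv ulow_rho[OF s0] h1'] by simp
  have "eventually (\<lambda>t. norm z \<le> C * norm (\<rho> (Em (t *\<^sub>R alpha)) *v z)) at_top"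
    using C(2)
  proof eventually_elim
    case (elim t)
    have inW: "\<rho> (Em (t *\<^sub>R alpha)) *v z \<in> W" using invW[OF zW suma] .
    have "z = \<rho> (Em (t *\<^sub>R (- alpha))) *v (\<rho> (Em (t *\<^sub>R alpha)) *v z)"
      using Emv[OF suma[of "-t"] suma[of t], of z] rep_1[OF rep] by (simp add: Em_0)
    then show ?case using elim inW by metis
  qed
  moreover have "((\<lambda>t. C * norm (\<rho> (Em (t *\<^sub>R alpha)) *v z)) \<longlongrightarrow> C * 0) at_top"
    by (intro tendsto_mult tendsto_const) (use tendsto_norm[OF lim] in simp)
  ultimately have "norm z \<le> C * 0"
    by (intro tendsto_le[OF trivial_limit_at_top_linorder _ tendsto_const]) auto
  then have z0: "z = 0" by simp
  have "w = \<rho> (ulow (- one)) *v z"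
    using rep_1[OF rep] by (simp add: z_def mulv[symmetric] ulow_SL ulow_ulow ulow_0)
  then show ?thesis by (simp add: z0)
qed


lemma oneparam_deriv:
  fixes \<phi> :: "real \<Rightarrow> real^'m^'m"
  assumes cont: "continuous_on UNIV \<phi>" and hom: "\<And>s t. \<phi> (s + t) = \<phi> s ** \<phi> t" and one: "\<phi> 0 = mat 1"
  shows "\<exists>D. (\<phi> has_vector_derivative D) (at 0)"
proof -
  obtain K where Kp: "K > 0" and K: "\<And>a b. norm ((a::real^'m^'m) *v (b::real^'m)) \<le> norm a * norm b * K"
    using bounded_bilinear.pos_bounded[OF bb_mv] by blast
  have "isCont \<phi> 0" using cont by (simp add: continuous_on_eq_continuous_at)
  then obtain \<delta> where \<delta>: "\<delta> > 0" "\<And>s. dist s 0 < \<delta> \<Longrightarrow> dist (\<phi> s) (\<phi> 0) < 1 / (2 * K)"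
  proof -
    have "1 / (2 * K) > 0" using Kp by simp
    then show ?thesis using that \<open>isCont \<phi> 0\<close> unfolding continuous_at_eps_delta by blast
  qed
  define h where "h = min (\<delta> / 2) (1/2)"
  have h: "h > 0" "h < \<delta>" "h \<le> 1/2" using \<delta> by (auto simp: h_def)
  have intg: "\<phi> integrable_on {a..b}" for a b
    by (rule integrable_continuous_real) (rule continuous_on_subset[OF cont], simp)
  define F where "F = integral {0..h} \<phi>"
  have Fb: "norm (F - h *\<^sub>R mat 1) \<le> 1 / (2 * K) * h"
  proof -
    have "((\<lambda>s. \<phi> s - mat 1) has_integral (F - h *\<^sub>R mat 1)) {0..h}"
      unfolding F_def using h has_integral_diff[OF integrable_integral[OF intg] has_integral_const_real[of "mat 1 :: real^'m^'m" 0 h]]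
      by simp
    from has_integral_bound_real[OF _ _ this, of "1 / (2 * K)" "{}"] show ?thesis
      using \<delta>(2) h Kp by (auto simp: dist_norm one less_imp_le)
  qed
  have Finj: "F *v x = 0 \<Longrightarrow> x = 0" for x
  proof -
    assume Fx: "F *v x = 0"
    have "h *\<^sub>R x = (h *\<^sub>R mat 1 - F) *v x"
      using Fx by (simp add: algebra_simps scaleR_matrix_vector_assoc[symmetric])
    then have "norm (h *\<^sub>R x) \<le> norm (h *\<^sub>R mat 1 - F) * norm x * K"
      using K by metis
    also have "\<dots> \<le> (1 / (2 * K) * h) * norm x * K"
      using Fb Kp by (intro mult_right_mono) (auto simp: norm_minus_commute)
    also have "\<dots> = h / 2 * norm x" using Kp by simp
    finally have "h * norm x \<le> h / 2 * norm x" using h by simp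
    then show "x = 0" using h by simp
  qed
  then obtain Finv where Finv: "F ** Finv = mat 1"
    using matrix_left_invertible_ker[of F] matrix_left_right_inverse by metis
  define G where "G u = integral {-2..u} \<phi>" for u
  have shift: "\<phi> t ** F = G (t + h) - G t" if t: "t \<in> {-1..1}" for t
  proof -
    have bl: "bounded_linear (\<lambda>X. \<phi> t ** (X::real^'m^'m))"
      by (rule bounded_bilinear.bounded_linear_right[OF bb_mm])
    have "\<phi> t ** F = integral {0..h} (\<lambda>s. \<phi> t ** \<phi> s)"
      unfolding F_def using integral_linear[OF intg bl] by (simp add: o_def)
    also have "\<dots> = integral {0..h} (\<lambda>s. \<phi> (s + t))"
      by (simp only: hom[symmetric]) (simp add: add.commute)
    also have "\<dots> = integral {t..t+h} \<phi>"
      using integral_shift_real_ivl[where a=t and b="t+h" and c=t and f=\<phi>] by simp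
    also have "\<dots> = G (t + h) - G t"
    proof -
      have c: "integral {-2..t} \<phi> + integral {t..t+h} \<phi> = integral {-2..t+h} \<phi>"
        by (rule Henstock_Kurzweil_Integration.integral_combine) (use t h intg in auto)
      show ?thesis by (simp add: G_def c[symmetric])
    qed
    finally show ?thesis .
  qed
  have Gd: "(G has_vector_derivative \<phi> u) (at u)" if "u \<in> {-2<..<2}" for u
  proof -
    have "(G has_vector_derivative \<phi> u) (at u within {-2..2})"
      unfolding G_def
    proof (rule integral_has_vector_derivative)
      show "continuous_on {-2..2} \<phi>" by (rule continuous_on_subset[OF cont]) simp
      show "u \<in> {-2..2}" using that by simp
    qed
    moreover have "u \<in> interior {-2..2::real}" using that by simp
    ultimately show ?thesis by (simp only: at_within_interior)
  qed
  have eq: "\<phi> t = (G (t + h) - G t) ** Finv" if "t \<in> {-1<..<1}" for t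
  proof -
    have "\<phi> t = (\<phi> t ** F) ** Finv" by (simp flip: matrix_mul_assoc add: Finv)
    also have "\<phi> t ** F = G (t + h) - G t" using shift[of t] that by simp
    finally show ?thesis .
  qed
  have d1: "((\<lambda>t. G (t + h)) has_vector_derivative \<phi> h) (at 0)"
  proof -
    have "((G \<circ> (\<lambda>t. t + h)) has_vector_derivative (1 *\<^sub>R \<phi> h)) (at 0)"
    proof (rule vector_diff_chain_at)
      show "((\<lambda>t. t + h) has_vector_derivative 1) (at 0)"
        by (auto intro!: derivative_eq_intros)
      show "(G has_vector_derivative \<phi> h) (at (0 + h))"
        using Gd[of h] h by simp
    qed
    then show ?thesis by (simp add: o_def)
  qed
  have d2: "(G has_vector_derivative \<phi> 0) (at 0)" by (rule Gd) simp
  have "((\<lambda>t. (G (t + h) - G t) ** Finv) has_vector_derivative ((\<phi> h - \<phi> 0) ** Finv)) (at 0)"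
    by (rule bounded_linear.has_vector_derivative[OF bounded_bilinear.bounded_linear_left[OF bb_mm]])
       (rule has_vector_derivative_diff[OF d1 d2])
  then have "(\<phi> has_vector_derivative ((\<phi> h - \<phi> 0) ** Finv)) (at 0)"
  proof (rule has_vector_derivative_transform_within_open[of _ _ _ "{-1<..<1}"])
    fix y :: real assume "y \<in> {-1<..<1}"
    then show "(G (y + h) - G y) ** Finv = \<phi> y" using eq[of y] by simp
  qed auto
  then show ?thesis by blast
qed


lemma eig_exp:
  fixes \<phi> :: "real \<Rightarrow> real^'m^'m"
  assumes hom: "\<And>s t. \<phi> (s + t) = \<phi> s ** \<phi> t" and one: "\<phi> 0 = mat 1"
    and D: "(\<phi> has_vector_derivative D) (at 0)" and x: "D *v x = \<mu> *\<^sub>R x"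
  shows "\<phi> t *v x = exp (\<mu> * t) *\<^sub>R x"
proof -
  have dphi: "(\<phi> has_vector_derivative \<phi> s ** D) (at s)" for s
  proof -
    have "((\<phi> \<circ> (\<lambda>r. r - s)) has_vector_derivative (1 *\<^sub>R D)) (at s)"
    proof (rule vector_diff_chain_at)
      show "((\<lambda>r. r - s) has_vector_derivative 1) (at s)" by (auto intro!: derivative_eq_intros)
      show "(\<phi> has_vector_derivative D) (at (s - s))" using D by simp
    qed
    then have "((\<lambda>r. \<phi> s ** \<phi> (r - s)) has_vector_derivative \<phi> s ** D) (at s)"
      using bounded_linear.has_vector_derivative[OF bounded_bilinear.bounded_linear_right[OF bb_mm]]
      by (simp add: o_def)
    moreover have "(\<lambda>r. \<phi> s ** \<phi> (r - s)) = \<phi>"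
    proof
      fix r show "\<phi> s ** \<phi> (r - s) = \<phi> r" using hom[of s "r - s"] by simp
    qed
    ultimately show ?thesis by (simp only:)
  qed
  define g where "g r = exp (- \<mu> * r) *\<^sub>R (\<phi> r *v x)" for r
  have dg: "(g has_vector_derivative 0) (at r within UNIV)" for r
  proof -
    have d1: "((\<lambda>r. \<phi> r *v x) has_vector_derivative (\<phi> r ** D) *v x) (at r)"
      using bounded_linear.has_vector_derivative[OF bounded_bilinear.bounded_linear_left[OF bb_mv] dphi[of r]] .
    have "(g has_vector_derivative (exp (- \<mu> * r) *\<^sub>R ((\<phi> r ** D) *v x) + (- \<mu> * exp (- \<mu> * r)) *\<^sub>R (\<phi> r *v x))) (at r)"
      unfolding g_def
      by (rule has_vector_derivative_scaleR[OF _ d1]) (auto intro!: derivative_eq_intros)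
    moreover have "(\<phi> r ** D) *v x = \<mu> *\<^sub>R (\<phi> r *v x)"
      by (simp add: matrix_vector_mul_assoc[symmetric] x matrix_vector_mult_scaleR)
    moreover have "exp (- \<mu> * r) *\<^sub>R (\<mu> *\<^sub>R (\<phi> r *v x)) + (- \<mu> * exp (- \<mu> * r)) *\<^sub>R (\<phi> r *v x) = 0"
      by (simp only: scaleR_scaleR flip: scaleR_left_distrib) simp
    ultimately show ?thesis by (simp only:)
  qed
  obtain c where c: "\<And>r. r \<in> UNIV \<Longrightarrow> g r = c"
    using has_vector_derivative_zero_constant[of UNIV g] dg by blast
  have "g t = g 0" using c by simp
  then have "exp (- \<mu> * t) *\<^sub>R (\<phi> t *v x) = x" by (simp add: g_def one)
  then have "exp (\<mu> * t) *\<^sub>R (exp (- \<mu> * t) *\<^sub>R (\<phi> t *v x)) = exp (\<mu> * t) *\<^sub>R x" by simp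
  then show ?thesis by (simp add: exp_add[symmetric])
qed


lemma ker_nz_zero:
  fixes D :: "real^'m^'m"
  assumes v: "v \<in> span (\<Union>\<mu>\<in>{\<mu>. \<mu> \<noteq> 0}. eigsp D \<mu>)" and Dv: "D *v v = 0"
  shows "v = 0"
proof -
  define S where "S = (\<Union>\<mu>\<in>{\<mu>. \<mu> \<noteq> 0}. eigsp D \<mu>)"
  define V where "V = span S"
  define f where "f = (\<lambda>y. D *v y)"
  have lf: "linear f" unfolding f_def by (rule matrix_vector_mul_linear)
  obtain B where B: "B \<subseteq> V" "independent B" "V \<subseteq> span B" "card B = dim V"
    by (rule basis_exists)
  have finB: "finite B" using B(2) by (rule independent_imp_finite)
  have "span B \<subseteq> V" unfolding V_def by (rule span_minimal) (use B(1) in \<open>simp_all add: V_def subspace_span\<close>)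
  then have spB: "span B = V" using B(3) by (rule subset_antisym)
  have fS: "f ` S \<subseteq> span S"
  proof
    fix y assume "y \<in> f ` S"
    then obtain s where s: "s \<in> S" "y = f s" by blast
    then obtain \<mu> where "s \<in> eigsp D \<mu>" unfolding S_def by blast
    then have "y = \<mu> *\<^sub>R s" using s(2) unfolding f_def eigsp_def by simp
    then show "y \<in> span S" using s(1) by (simp add: span_base span_scale)
  qed
  have Sf: "S \<subseteq> f ` V"
  proof
    fix s assume s: "s \<in> S"
    then obtain \<mu> where \<mu>: "\<mu> \<noteq> 0" "D *v s = \<mu> *\<^sub>R s" unfolding S_def eigsp_def by blast
    have "f (inverse \<mu> *\<^sub>R s) = s" using \<mu> unfolding f_def by (simp add: matrix_vector_mult_scaleR)
    moreover have "inverse \<mu> *\<^sub>R s \<in> V" unfolding V_def using s by (intro span_scale span_base)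
    ultimately show "s \<in> f ` V" by (metis image_eqI)
  qed
  have imV: "f ` V = span (f ` S)" unfolding V_def by (rule linear_span_image[OF lf, symmetric])
  have fV: "f ` V = V"
  proof
    show "f ` V \<subseteq> V" unfolding imV unfolding V_def by (rule span_minimal[OF fS subspace_span])
    show "V \<subseteq> f ` V" unfolding imV unfolding V_def
      by (rule span_minimal) (use Sf in \<open>simp_all add: imV subspace_span\<close>)
  qed
  have "span (f ` B) = f ` span B" by (rule linear_span_image[OF lf])
  also have "\<dots> = f ` V" by (simp only: spB)
  also have "\<dots> = V" by (rule fV)
  finally have spfB: "span (f ` B) = V" .
  have "f ` B \<subseteq> span (f ` B)" by (rule span_superset)
  then have fBV: "f ` B \<subseteq> V" by (simp only: spfB)
  have cle: "card (f ` B) \<le> dim V" using card_image_le[OF finB, of f] B(4) by linarith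
  have indfB: "independent (f ` B)"
  proof (rule card_le_dim_spanning[OF fBV _ _ cle])
    show "V \<subseteq> span (f ` B)" by (simp only: spfB subset_refl)
    show "finite (f ` B)" using finB by (rule finite_imageI)
  qed
  have "card (f ` B) = dim V"
    by (rule basis_card_eq_dim[OF fBV _ indfB]) (simp only: spfB subset_refl)
  then have "inj_on f B" using B(4) finB by (simp add: inj_on_iff_eq_card)
  then have inj: "inj_on f (span B)" by (rule linear_inj_on_span_independent_image[OF lf indfB])
  have "v \<in> span B" using v spB by (simp add: V_def S_def)
  moreover have "f v = f 0" using Dv by (simp add: f_def)
  moreover have "0 \<in> span B" by (rule span_zero)
  ultimately show "v = 0" using inj by (meson inj_onD)
qed


lemma Vminus_sub: "Vminus D \<subseteq> span (\<Union>\<mu>\<in>{\<mu>. \<mu> \<noteq> 0}. eigsp D \<mu>)"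
  unfolding Vminus_def by (intro span_mono UN_mono) auto

lemma pi0_eq:
  fixes D :: "real^'m^'m"
  assumes x0: "x0 \<in> eigsp D 0" and y: "y \<in> Vminus D"
  shows "pi0 D (x0 + y) = x0"
  unfolding pi0_def
proof (rule the_equality)
  have yy: "y \<in> span (\<Union>\<mu>\<in>{\<mu>. \<mu> \<noteq> 0}. eigsp D \<mu>)" using y Vminus_sub by blast
  show "x0 \<in> eigsp D 0 \<and> x0 + y - x0 \<in> span (\<Union>\<mu>\<in>{\<mu>. \<mu> \<noteq> 0}. eigsp D \<mu>)"
    using x0 yy by simp
next
  fix w assume w: "w \<in> eigsp D 0 \<and> x0 + y - w \<in> span (\<Union>\<mu>\<in>{\<mu>. \<mu> \<noteq> 0}. eigsp D \<mu>)"
  have yy: "y \<in> span (\<Union>\<mu>\<in>{\<mu>. \<mu> \<noteq> 0}. eigsp D \<mu>)" using y Vminus_sub by blast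
  have "w - x0 = y - (x0 + y - w)" by simp
  moreover have "y - (x0 + y - w) \<in> span (\<Union>\<mu>\<in>{\<mu>. \<mu> \<noteq> 0}. eigsp D \<mu>)"
    by (rule span_diff) (use yy w in simp_all)
  ultimately have "w - x0 \<in> span (\<Union>\<mu>\<in>{\<mu>. \<mu> \<noteq> 0}. eigsp D \<mu>)" by (simp only:)
  moreover have "D *v (w - x0) = 0" using w x0 by (simp add: eigsp_def matrix_vector_mult_diff_distrib)
  ultimately have "w - x0 = 0" by (rule ker_nz_zero)
  then show "w = x0" by simp
qed


definition blk :: "real \<Rightarrow> real^'n^'n \<Rightarrow> real^('n::finite option)^('n option)" where
  "blk c M = (\<chi> i j. case i of None \<Rightarrow> (case j of None \<Rightarrow> c | Some _ \<Rightarrow> 0)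
                              | Some a \<Rightarrow> (case j of None \<Rightarrow> 0 | Some b \<Rightarrow> M$a$b))"

definition xs :: "real^('n::finite option) \<Rightarrow> real^'n" where
  "xs x = (\<chi> b. x$(Some b))"

lemma blk_mult: fixes M :: "real^'n::finite^'n" shows "blk c M *v x = (\<chi> i. case i of None \<Rightarrow> c * x$None | Some a \<Rightarrow> (M *v xs x) $ a)"
  unfolding vec_eq_iff
proof
  fix i :: "'n option"
  show "(blk c M *v x) $ i = (\<chi> i. case i of None \<Rightarrow> c * x$None | Some a \<Rightarrow> (M *v xs x) $ a) $ i"
    by (cases i) (simp_all add: blk_def matrix_vector_mult_def sum_option_UNIV xs_def)
qed

lemma xs_blk: "xs (blk c M *v x) = M *v xs x"
  by (simp add: xs_def blk_mult vec_eq_iff)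

lemma blk_None: "(blk c M *v x) $ None = c * x $ None" by (simp add: blk_mult)
lemma blk_Some: "(blk c M *v x) $ Some a = (M *v xs x) $ a" by (simp add: blk_mult)

lemma blk_blk: "blk c M ** blk d N = blk (c * d) (M ** N)"
proof (rule mat_eqI)
  fix x :: "real^('a option)"
  show "(blk c M ** blk d N) *v x = blk (c * d) (M ** N) *v x"
    unfolding vec_eq_iff matrix_vector_mul_assoc[symmetric]
  proof
    fix i show "(blk c M *v (blk d N *v x)) $ i = (blk (c * d) (M ** N) *v x) $ i"
      by (cases i) (simp_all only: blk_None blk_Some xs_blk, simp_all add: matrix_vector_mul_assoc)
  qed
qed

lemma blk_1: "blk 1 (mat 1) = (mat 1 :: real^('n::finite option)^('n option))"
  by (rule mat_eqI) (auto simp: blk_mult xs_def vec_eq_iff split: option.splits)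

lemma expA_blk: "expA t = blk (exp (t * real CARD('n))) (exp (- t) *\<^sub>R mat 1 :: real^'n^'n)"
  by (auto simp: expA_def blk_def vec_eq_iff mat_def split: option.splits)


lemma conj_umat:
  fixes X Y :: "real^'n::finite^'n"
  assumes YX: "Y ** X = mat 1"
  shows "blk 1 Y ** umat (axis k 1) ** blk 1 X = umat (X $ k)"
proof (rule mat_eqI)
  fix x :: "real^('n option)"
  show "(blk 1 Y ** umat (axis k 1) ** blk 1 X) *v x = umat (X $ k) *v x"
    unfolding vec_eq_iff matrix_vector_mul_assoc[symmetric]
  proof
    fix i show "(blk 1 Y *v (umat (axis k 1) *v (blk 1 X *v x))) $ i = (umat (X $ k) *v x) $ i"
    proof (cases i)
      case None
      have e: "(X *v xs x)$k = (\<Sum>j\<in>UNIV. X$k$j * x$Some j)" by (simp add: matrix_vector_mult_def xs_def)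
      show ?thesis using None
        by (simp add: blk_None blk_Some umat_mult sum_axis_mult e)
    next
      case (Some a)
      have "xs (umat (axis k 1) *v (blk 1 X *v x)) = X *v xs x"
        by (simp add: xs_def vec_eq_iff umat_mult blk_mult)
      then have "(Y *v xs (umat (axis k 1) *v (blk 1 X *v x))) = xs x"
        by (simp add: matrix_vector_mul_assoc YX)
      then show ?thesis using Some
        by (simp add: blk_mult umat_mult xs_def vec_eq_iff)
    qed
  qed
qed


theorem proposition4p2:
  fixes \<rho> :: "real^('n::finite option)^('n option) \<Rightarrow> real^'m^'m"
    and B :: "(real^'n) set" and v :: "real^'m"
  assumes "is_cont_rep \<rho>"
    and "affine_basis B"
    and "v \<noteq> 0"
    and "\<forall>e\<in>B. \<rho> (umat e) *v v \<in> {x + y | x y. x \<in> eigsp (dA \<rho>) 0 \<and> y \<in> Vminus (dA \<rho>)}"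
  shows "\<forall>e\<in>B. pi0 (dA \<rho>) (\<rho> (umat e) *v v) \<noteq> 0"
proof
  fix e0 assume e0: "e0 \<in> B"
  show "pi0 (dA \<rho>) (\<rho> (umat e0) *v v) \<noteq> 0"
  proof
    assume bad: "pi0 (dA \<rho>) (\<rho> (umat e0) *v v) = 0"
    have rep: "is_cont_rep \<rho>" by (rule assms(1))
    define \<phi> where "\<phi> t = \<rho> (expA t)" for t
    have hom: "\<phi> (s + t) = \<phi> s ** \<phi> t" for s t
      unfolding \<phi>_def expA_Em using rep_mult[OF rep Em_alpha_SL Em_alpha_SL, of s t]
      by (simp add: Em_Em scaleR_add_left)
    have one: "\<phi> 0 = mat 1" unfolding \<phi>_def expA_Em by (simp add: Em_0 rep_1[OF rep])
    have cexp: "continuous_on UNIV (\<lambda>t. expA t :: real^('n option)^('n option))"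
      unfolding expA_def
    proof (intro continuous_on_vec_lambda)
      fix i j :: "'n option"
      show "continuous_on UNIV (\<lambda>x. if i = j then if i = None then exp (x * real CARD('n)) else exp (- x) else 0)"
        by (cases i; cases j; cases "i = j") (simp_all add: continuous_intros)
    qed
    have cont: "continuous_on UNIV \<phi>"
      unfolding \<phi>_def
      by (rule continuous_on_compose2[OF _ cexp]) (use rep in \<open>auto simp: is_cont_rep_def expA_SL\<close>)
    obtain D0 where D0: "(\<phi> has_vector_derivative D0) (at 0)"
      using oneparam_deriv[OF cont hom one] by blast
    have DD: "dA \<rho> = D0"
      unfolding dA_def \<phi>_def[symmetric] by (rule vector_derivative_at[OF D0])
    have eig: "\<phi> t *v x = exp (\<mu> * t) *\<^sub>R x" if "x \<in> eigsp (dA \<rho>) \<mu>" for x \<mu> t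
      using eig_exp[OF hom one D0, of x \<mu> t] that DD by (simp add: eigsp_def)
    have lim: "((\<lambda>t. \<phi> t *v y) \<longlongrightarrow> 0) at_top" if "y \<in> Vminus (dA \<rho>)" for y
    proof -
      have "y \<in> span (\<Union>\<mu>\<in>{\<mu>. \<mu> < 0}. eigsp (dA \<rho>) \<mu>)" using that by (simp add: Vminus_def)
      then show ?thesis
      proof (induction rule: span_induct_alt)
        case base then show ?case by simp
      next
        case (step c x y)
        then obtain \<mu> where \<mu>: "\<mu> < 0" "x \<in> eigsp (dA \<rho>) \<mu>" by auto
        have "((\<lambda>t. exp (\<mu> * t)) \<longlongrightarrow> 0) at_top" using \<mu>(1) by real_asymp
        then have "((\<lambda>t. c *\<^sub>R (exp (\<mu> * t) *\<^sub>R x)) \<longlongrightarrow> c *\<^sub>R (0 *\<^sub>R x)) at_top"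
          by (intro tendsto_scaleR tendsto_const)
        then have "((\<lambda>t. \<phi> t *v (c *\<^sub>R x)) \<longlongrightarrow> 0) at_top"
          using eig[OF \<mu>(2)] by (simp add: matrix_vector_mult_scaleR)
        from tendsto_add[OF this step.IH] show ?case
          by (simp add: matrix_vector_right_distrib)
      qed
    qed
    have bdd: "BD at_top (\<lambda>t. \<phi> t *v x)" if hx: "x \<in> {a + b | a b. a \<in> eigsp (dA \<rho>) 0 \<and> b \<in> Vminus (dA \<rho>)}" for x
    proof -
      obtain a b where ab: "x = a + b" "a \<in> eigsp (dA \<rho>) 0" "b \<in> Vminus (dA \<rho>)" using hx by blast
      have "((\<lambda>t. a + \<phi> t *v b) \<longlongrightarrow> a + 0) at_top"
        by (intro tendsto_add tendsto_const lim ab(3))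
      moreover have "\<phi> t *v x = a + \<phi> t *v b" for t
        using eig[OF ab(2), of t] ab(1) by (simp add: matrix_vector_right_distrib)
      ultimately show ?thesis by (simp add: BD_tendsto)
    qed
    define w where "w = \<rho> (umat e0) *v v"
    obtain a b where ab: "w = a + b" "a \<in> eigsp (dA \<rho>) 0" "b \<in> Vminus (dA \<rho>)"
      using assms(4) e0 unfolding w_def by blast
    have "a = 0" using bad pi0_eq[OF ab(2,3)] ab(1) unfolding w_def by simp
    then have wV: "w \<in> Vminus (dA \<rho>)" using ab by simp
    define Bd where "Bd = (\<lambda>e'. e' - e0) ` (B - {e0})"
    have ind: "independent Bd" and spn: "span Bd = UNIV"
      using assms(2) e0 by (auto simp: affine_basis_def Bd_def)
    have finBd: "finite Bd" using ind independent_imp_finite by blast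
    have cardBd: "card Bd = CARD('n)"
      using basis_card_eq_dim[of Bd UNIV] ind spn by (simp add: dim_UNIV)
    obtain f where f: "bij_betw f (UNIV::'n set) Bd"
      using finite_same_card_bij[of "UNIV::'n set" Bd] finBd cardBd by auto
    define X :: "real^'n^'n" where "X = (\<chi> k. f k)"
    have rowsX: "rows X = Bd"
      using f by (auto simp: rows_def row_def X_def bij_betw_def)
    obtain Y where YX: "Y ** X = mat 1"
      using matrix_left_invertible_span_rows[of X] rowsX spn by auto
    have XY: "X ** Y = mat 1" using YX matrix_left_right_inverse by blast
    define P where "P = blk 1 Y"
    define Q where "Q = blk 1 X"
    have PQ: "P ** Q = mat 1" by (simp add: P_def Q_def blk_blk YX blk_1)
    have QP: "Q ** P = mat 1" by (simp add: P_def Q_def blk_blk XY blk_1)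
    define \<rho>' where "\<rho>' g = \<rho> (P ** g ** Q)" for g
    have conjSL: "P ** g ** Q \<in> SL" if "g \<in> SL" for g
    proof -
      have "det P * det Q = 1" using PQ det_mul[of P Q] by simp
      then show ?thesis using that by (simp add: SL_det det_mul algebra_simps)
    qed
    have cconj: "continuous_on SL (\<lambda>g. P ** g ** Q)"
      by (intro bounded_bilinear.continuous_on[OF bb_mm] continuous_on_const continuous_on_id)
    have rep': "is_cont_rep \<rho>'"
      unfolding is_cont_rep_def
    proof (intro conjI ballI)
      show "\<rho>' (mat 1) = mat 1" by (simp add: \<rho>'_def PQ rep_1[OF rep])
    next
      fix g h :: "real^('n option)^('n option)" assume g: "g \<in> SL" and h: "h \<in> SL"
      have "(P ** g ** Q) ** (P ** h ** Q) = P ** g ** (Q ** P) ** h ** Q"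
        by (simp add: matrix_mul_assoc)
      then have "P ** (g ** h) ** Q = (P ** g ** Q) ** (P ** h ** Q)"
        by (simp add: QP matrix_mul_assoc)
      then show "\<rho>' (g ** h) = \<rho>' g ** \<rho>' h"
        unfolding \<rho>'_def using rep_mult[OF rep conjSL[OF g] conjSL[OF h]] by simp
    next
      show "continuous_on SL \<rho>'"
        unfolding \<rho>'_def
        by (rule continuous_on_compose2[OF _ cconj]) (use rep conjSL in \<open>auto simp: is_cont_rep_def\<close>)
    qed
    have rexp: "\<rho>' (expA t) = \<phi> t" for t
    proof -
      have "P ** expA t ** Q = expA t"
        by (simp add: P_def Q_def expA_blk blk_blk mm_scaleR mm_scaleR2 YX)
      then show ?thesis by (simp add: \<rho>'_def \<phi>_def)
    qed
    have ru: "\<rho>' (umat (axis k 1)) = \<rho> (umat (f k))" for k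
    proof -
      have "P ** umat (axis k 1) ** Q = umat (X $ k)"
        unfolding P_def Q_def by (rule conj_umat[OF YX])
      then show ?thesis by (simp add: \<rho>'_def X_def)
    qed
    have h1: "((\<lambda>t. \<rho>' (expA t) *v w) \<longlongrightarrow> 0) at_top"
      using lim[OF wV] by (simp add: rexp)
    have h2: "BD at_top (\<lambda>t. \<rho>' (expA t) *v (\<rho>' (umat (axis k 1)) *v w))" for k
    proof -
      have "f k \<in> Bd" using f by (auto simp: bij_betw_def)
      then obtain e' where e': "e' \<in> B" "f k = e' - e0" by (auto simp: Bd_def)
      have "\<rho>' (umat (axis k 1)) *v w = \<rho> (umat e') *v v"
        using e' rep_mult[OF rep umat_SL umat_SL, of "f k" e0]
        by (simp add: ru w_def matrix_vector_mul_assoc umat_umat)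
      then show ?thesis using bdd[of "\<rho> (umat e') *v v"] assms(4) e'(1) by (simp add: rexp)
    qed
    have "w = 0" by (rule core[OF rep' h1 h2])
    moreover have "v = \<rho> (umat (- e0)) *v w"
    proof -
      have I: "\<rho> (umat (- e0)) ** \<rho> (umat e0) = mat 1"
        using rep_mult[OF rep umat_SL umat_SL, of "- e0" e0] rep_1[OF rep]
        by (simp add: umat_umat umat_0)
      show ?thesis by (simp add: w_def matrix_vector_mul_assoc I)
    qed
    ultimately show False using assms(3) by simp
  qed
qed


end
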